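(* Let $n\ge 3$ and let $H(t)$, $0\le t\le T$, be a piecewise-continuous Hamiltonian on $n$ qubits which at every time is U(1)-invariant and 3-local. Then the 3-body phase $\Phi_3$ and the phase $\Delta_3$ of the unitary generated by $H$ satisfy $$\Phi_3=2^{n-3}\,\Delta_3 \pmod{2\pi}.$$
   Context: Qubits $1,\dots,n$, Hilbert space $(\mathbb{C}^2)^{\otimes n}$, $Z_j$ the Pauli $Z$ on qubit $j$. An operator is $k$-local if it is a sum of terms each acting non-trivially on at most $k$ qubits. For $m=0,\dots,n$, $\Pi_m$ is the projector onto the span of computational basis states with exactly $m$ qubits in state $|1\rangle$. A Hamiltonian is U(1)-invariant if it commutes with $\sum_j Z_j$. For such $H(t)$, $V=\mathcal{T}\exp(-i\int_0^T H(t)dt)$ (time-ordered exponential) satisfies $V=\bigoplus_m V_m$ with $V_m$ the restriction of $V$ to the range of $\Pi_m$; $\theta_m=\arg\det(V_m)\in(-\pi,\pi]$; $\Delta_3=\theta_{n-1}-\theta_1-(n-2)(\theta_n-\theta_0)\pmod{2\pi}$. Define $C_l=\sum_{i_1<\cdots<i_l}Z_{i_1}\cdots Z_{i_l}$, $c_l(m)=\sum_{s=0}^l(-1)^s\binom{m}{s}\binom{n-m}{l-s}$ (so $C_l=\sum_m c_l(m)\Pi_m$), and the $l$-body phase $\Phi_l=-\int_0^T\mathrm{Tr}[H(t)C_l]\,dt=\sum_{m=0}^n c_l(m)\theta_m\pmod{2\pi}$. *)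

theory Defs
  imports "HOL-Analysis.Analysis"
begin

text \<open>Qubits are the elements of a finite type 'q (so n = CARD('q)).  A computational
basis state is identified with the set of qubits that are in state |1>, so operators on
(C^2)^{\<otimes> n} are matrices indexed by 'q set.\<close>

type_synonym 'q op = "complex ^ ('q set) ^ ('q set)"

definition pauliZ :: "'q::finite \<Rightarrow> 'q op" where
  "pauliZ j = (\<chi> S S'. if S = S' then (if j \<in> S then -1 else 1) else 0)"

definition totalZ :: "'q::finite op" where
  "totalZ = (\<Sum>j\<in>UNIV. pauliZ j)"

text \<open>M acts non-trivially only on the qubits in A, i.e. M = M_A \<otimes> Id on the complement.\<close>
definition acts_within :: "'q::finite set \<Rightarrow> 'q op \<Rightarrow> bool" where
  "acts_within A M \<longleftrightarrow> (\<exists>f. \<forall>S S'. M $ S $ S' =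
      (if S - A = S' - A then f (S \<inter> A) (S' \<inter> A) else 0))"

definition k_local :: "nat \<Rightarrow> 'q::finite op \<Rightarrow> bool" where
  "k_local k M \<longleftrightarrow> (\<exists>F. (\<forall>A. acts_within A (F A)) \<and>
      M = (\<Sum>A\<in>{A. card A \<le> k}. F A))"

definition u1_invariant :: "'q::finite op \<Rightarrow> bool" where
  "u1_invariant M \<longleftrightarrow> M ** totalZ = totalZ ** M"

definition hermitian :: "'q::finite op \<Rightarrow> bool" where
  "hermitian M \<longleftrightarrow> (\<forall>S S'. M $ S $ S' = cnj (M $ S' $ S))"

definition piecewise_continuous :: "real \<Rightarrow> (real \<Rightarrow> 'a::topological_space) \<Rightarrow> bool" where
  "piecewise_continuous T f \<longleftrightarrow> (\<exists>D. finite D \<and> D \<subseteq> {0..T} \<and>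
      continuous_on ({0..T} - D) f \<and>
      (\<forall>s\<in>D. (\<exists>l. (f \<longlongrightarrow> l) (at s within {0..<s})) \<and>
              (\<exists>r. (f \<longlongrightarrow> r) (at s within {s<..T}))))"

definition time_ordered_exp :: "real \<Rightarrow> (real \<Rightarrow> 'q::finite op) \<Rightarrow> (real \<Rightarrow> 'q op) \<Rightarrow> bool" where
  "time_ordered_exp T H V \<longleftrightarrow> continuous_on {0..T} V \<and>
     (\<forall>t\<in>{0..T}. ((\<lambda>s. \<chi> a b. - \<i> * (H s ** V s) $ a $ b) has_integral (V t - mat 1)) {0..t})"

text \<open>Projector \<Pi>_m onto states with exactly m ones, and determinant of the block V_m
 (Leibniz formula over the basis of the range of \<Pi>_m).\<close>
definition Pi_proj :: "nat \<Rightarrow> 'q::finite op" where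
  "Pi_proj m = (\<chi> S S'. if S = S' \<and> card S = m then 1 else 0)"

definition block_det :: "'q::finite op \<Rightarrow> nat \<Rightarrow> complex" where
  "block_det V m = (\<Sum>p\<in>{p. p permutes {S::'q set. card S = m}}.
       of_int (sign p) * (\<Prod>S\<in>{S. card S = m}. V $ S $ p S))"

definition theta :: "'q::finite op \<Rightarrow> nat \<Rightarrow> real" where
  "theta V m = Arg (block_det V m)"

definition Delta3 :: "'q::finite op \<Rightarrow> real" where
  "Delta3 V = theta V (CARD('q) - 1) - theta V 1
      - (real CARD('q) - 2) * (theta V (CARD('q)) - theta V 0)"

text \<open>C_l = sum over l-subsets B of qubits of the product of Z_j, j \<in> B (these commute and
are diagonal, so the product is the diagonal matrix of the products of diagonal entries).\<close>
definition C_op :: "nat \<Rightarrow> 'q::finite op" where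
  "C_op l = (\<Sum>B\<in>{B::'q set. card B = l}.
      (\<chi> S S'. if S = S' then (\<Prod>j\<in>B. pauliZ j $ S $ S) else 0))"

definition body_phase :: "nat \<Rightarrow> real \<Rightarrow> (real \<Rightarrow> 'q::finite op) \<Rightarrow> complex" where
  "body_phase l T H = - integral {0..T} (\<lambda>t. trace (H t ** C_op l))"

definition cong_2pi :: "complex \<Rightarrow> complex \<Rightarrow> bool" where
  "cong_2pi x y \<longleftrightarrow> (\<exists>k::int. x - y = of_int k * 2 * of_real pi)"

end

theory Submission
  imports Defs
begin



definition trm :: "'q::finite op \<Rightarrow> nat \<Rightarrow> complex" where
  "trm M m = (\<Sum>S\<in>{S. card S = m}. M $ S $ S)"

definition c3 :: "'q::finite set \<Rightarrow> complex" where
  "c3 S = (\<Sum>B\<in>{B::'q set. card B = 3}. \<Prod>j\<in>B. if j \<in> S then -1 else 1)"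

lemma C_op3_entry: "C_op 3 $ S $ S' = (if S = S' then c3 S else 0)"
  unfolding C_op_def c3_def by (simp add: sum_component pauliZ_def)

lemma trace_C3: "trace (M ** C_op 3) = (\<Sum>S\<in>UNIV. M $ S $ S * c3 (S::'q::finite set))"
  unfolding trace_def matrix_matrix_mult_def
  by (simp add: C_op3_entry if_distrib cong: if_cong)

lemma sum_inter_group:
  fixes A :: "'q::finite set" and \<phi> :: "'q set \<Rightarrow> complex"
  shows "(\<Sum>S\<in>UNIV. \<phi> (S \<inter> A)) = of_nat (2 ^ (CARD('q) - card A)) * (\<Sum>T\<in>Pow A. \<phi> T)"
proof -
  have "(\<Sum>S\<in>UNIV. \<phi> (S \<inter> A)) = (\<Sum>T\<in>Pow A. \<Sum>S\<in>{S\<in>UNIV. S \<inter> A = T}. \<phi> (S \<inter> A))"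
    by (rule sum.group[symmetric]) auto
  also have "\<dots> = (\<Sum>T\<in>Pow A. of_nat (2^(CARD('q) - card A)) * \<phi> T)"
  proof (rule sum.cong[OF refl])
    fix T assume T: "T \<in> Pow A"
    have "card {S\<in>UNIV. S \<inter> A = T} = card (Pow (-A))"
      by (rule bij_betw_same_card[of "\<lambda>S. S - A"], rule bij_betw_byWitness[where f'="\<lambda>R. T \<union> R"])
         (use T in \<open>auto\<close>)
    also have "\<dots> = 2 ^ (CARD('q) - card A)"
      by (simp add: card_Pow Compl_eq_Diff_UNIV card_Diff_subset)
    finally have c: "card {S\<in>UNIV. S \<inter> A = T} = 2 ^ (CARD('q) - card A)" .
    have "(\<Sum>S\<in>{S\<in>UNIV. S \<inter> A = T}. \<phi> (S \<inter> A)) = (\<Sum>S\<in>{S\<in>UNIV. S \<inter> A = T}. \<phi> T)"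
      by (rule sum.cong) auto
    then show "(\<Sum>S\<in>{S\<in>UNIV. S \<inter> A = T}. \<phi> (S \<inter> A)) = of_nat (2^(CARD('q) - card A)) * \<phi> T"
      using c by simp
  qed
  finally show ?thesis by (simp add: sum_distrib_left)
qed

lemma sum_zero_flip:
  fixes A B :: "'q::finite set" and g :: "'q set \<Rightarrow> complex"
  assumes j0: "j0 \<in> B" "j0 \<notin> A"
  shows "(\<Sum>S\<in>UNIV. g (S \<inter> A) * (\<Prod>j\<in>B. if j \<in> S then -1 else (1::complex))) = 0"
proof -
  define \<sigma> where "\<sigma> = (\<lambda>S::'q set. if j0 \<in> S then S - {j0} else insert j0 S)"
  define h where "h = (\<lambda>S. g (S \<inter> A) * (\<Prod>j\<in>B. if j \<in> S then -1 else (1::complex)))"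
  have inv: "\<sigma> (\<sigma> S) = S" for S unfolding \<sigma>_def by auto
  have bij: "bij_betw \<sigma> UNIV UNIV"
    by (rule bij_betw_byWitness[where f'=\<sigma>]) (auto simp: inv)
  have hs: "h (\<sigma> S) = - h S" for S
  proof -
    have A: "\<sigma> S \<inter> A = S \<inter> A" unfolding \<sigma>_def using j0 by auto
    have P: "(\<Prod>j\<in>B. if j \<in> X then -1 else (1::complex)) =
       (if j0 \<in> X then -1 else 1) * (\<Prod>j\<in>B-{j0}. if j \<in> X then -1 else (1::complex))" for X
      using j0 by (simp add: prod.remove)
    have Q: "(\<Prod>j\<in>B-{j0}. if j \<in> \<sigma> S then -1 else (1::complex)) = (\<Prod>j\<in>B-{j0}. if j \<in> S then -1 else (1::complex))"
      by (rule prod.cong) (auto simp: \<sigma>_def)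
    show ?thesis unfolding h_def A using P[of "\<sigma> S"] P[of S] Q
      by (simp add: \<sigma>_def)
  qed
  have "sum h UNIV = sum (\<lambda>S. h (\<sigma> S)) UNIV"
    using sum.reindex_bij_betw[OF bij, of h] by simp
  also have "\<dots> = - sum h UNIV" by (simp add: hs sum_negf)
  finally have "sum h UNIV = 0" by simp
  then show ?thesis unfolding h_def .
qed

lemma prod_sign_subset:
  fixes A T :: "'q::finite set"
  assumes "T \<subseteq> A"
  shows "(\<Prod>j\<in>A. if j \<in> T then -1 else (1::complex)) = (-1) ^ card T"
proof -
  have "(\<Prod>j\<in>A. if j \<in> T then -1 else (1::complex)) = (\<Prod>j\<in>A \<inter> {j. j \<in> T}. -1) * (\<Prod>j\<in>A \<inter> - {j. j \<in> T}. 1)"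
    by (rule prod.If_cases) simp
  also have "A \<inter> {j. j \<in> T} = T" using assms by auto
  finally show ?thesis by simp
qed

lemma lhs_formula:
  fixes A :: "'q::finite set" and g :: "'q set \<Rightarrow> complex"
  assumes cA: "card A \<le> 3"
  shows "(\<Sum>S\<in>UNIV. g (S \<inter> A) * c3 S) =
    (if card A = 3 then of_nat (2^(CARD('q)-3)) * (\<Sum>T\<in>Pow A. (-1)^card T * g T) else 0)"
proof -
  have "(\<Sum>S\<in>UNIV. g (S \<inter> A) * c3 S) =
      (\<Sum>B\<in>{B::'q set. card B = 3}. \<Sum>S\<in>UNIV. g (S \<inter> A) * (\<Prod>j\<in>B. if j \<in> S then -1 else 1))"
    unfolding c3_def by (simp add: sum_distrib_left sum.swap[of _ UNIV])
  also have "\<dots> = (\<Sum>B\<in>{B::'q set. card B = 3}. if B = A then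
        of_nat (2^(CARD('q)-3)) * (\<Sum>T\<in>Pow A. (-1)^card T * g T) else 0)"
  proof (rule sum.cong[OF refl])
    fix B :: "'q set" assume B: "B \<in> {B. card B = 3}"
    show "(\<Sum>S\<in>UNIV. g (S \<inter> A) * (\<Prod>j\<in>B. if j \<in> S then -1 else 1)) = (if B = A then
        of_nat (2^(CARD('q)-3)) * (\<Sum>T\<in>Pow A. (-1)^card T * g T) else 0)"
    proof (cases "B = A")
      case True
      have "(\<Sum>S\<in>UNIV. g (S \<inter> A) * (\<Prod>j\<in>B. if j \<in> S then -1 else 1)) =
            (\<Sum>S\<in>UNIV. (\<lambda>T. g T * (\<Prod>j\<in>A. if j \<in> T then -1 else 1)) (S \<inter> A))"
        using True by (intro sum.cong refl) (auto intro!: prod.cong)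
      also have "\<dots> = of_nat (2 ^ (CARD('q) - card A)) * (\<Sum>T\<in>Pow A. g T * (\<Prod>j\<in>A. if j \<in> T then -1 else 1))"
        by (rule sum_inter_group[of "\<lambda>T. g T * (\<Prod>j\<in>A. if j \<in> T then -1 else 1)" A])
      also have "(\<Sum>T\<in>Pow A. g T * (\<Prod>j\<in>A. if j \<in> T then -1 else 1)) = (\<Sum>T\<in>Pow A. (-1)^card T * g T)"
        by (rule sum.cong) (simp_all add: prod_sign_subset)
      finally have "(\<Sum>S\<in>UNIV. g (S \<inter> A) * (\<Prod>j\<in>B. if j \<in> S then -1 else 1)) = of_nat (2 ^ (CARD('q) - card A)) * (\<Sum>T\<in>Pow A. (-1)^card T * g T)" .
      moreover have "card A = 3" using True B by simp
      ultimately show ?thesis using True by simp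
    next
      case False
      have "\<not> B \<subseteq> A"
      proof
        assume "B \<subseteq> A"
        then have "card B \<le> card A" by (simp add: card_mono)
        then have "card B = card A" using B cA by simp
        then have "B = A" using card_subset_eq[of A B] \<open>B \<subseteq> A\<close> by simp
        then show False using False by simp
      qed
      then obtain j0 where j0: "j0 \<in> B" "j0 \<notin> A" by blast
      have "(\<Sum>S\<in>UNIV. g (S \<inter> A) * (\<Prod>j\<in>B. if j \<in> S then -1 else (1::complex))) = 0"
        by (rule sum_zero_flip[OF j0])
      then show ?thesis using False by (simp only: if_False)
    qed
  qed
  also have "\<dots> = (if card A = 3 then of_nat (2^(CARD('q)-3)) * (\<Sum>T\<in>Pow A. (-1)^card T * g T) else 0)"
    by (subst sum.delta) auto
  finally show ?thesis .
qed




lemma card0_sets: "{S::'q::finite set. card S = 0} = {{}}"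
  by auto

lemma cardn_sets: "{S::'q::finite set. card S = CARD('q)} = {UNIV}"
  using card_subset_eq[of "UNIV::'q set"] by auto

lemma card1_sets: "{S::'q::finite set. card S = 1} = range (\<lambda>j. {j})"
  by (auto simp: card_1_singleton_iff)

lemma cardn1_sets: "{S::'q::finite set. card S = CARD('q) - 1} = range (\<lambda>j. -{j})"
proof (intro set_eqI iffI)
  fix S :: "'q set" assume "S \<in> {S. card S = CARD('q) - 1}"
  then have "card S = CARD('q) - 1" by simp
  then have "card (-S) = 1" by (simp add: Compl_eq_Diff_UNIV card_Diff_subset)
  then obtain j where "-S = {j}" by (auto simp: card_1_singleton_iff)
  then have "S = -{j}" by (metis double_compl)
  then show "S \<in> range (\<lambda>j. -{j})" by blast
next
  fix S :: "'q set" assume "S \<in> range (\<lambda>j. -{j})"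
  then obtain j where "S = -{j}" by blast
  then show "S \<in> {S. card S = CARD('q) - 1}" by (simp add: Compl_eq_Diff_UNIV card_Diff_subset)
qed

lemma sum_split_UNIV:
  fixes f :: "'q::finite \<Rightarrow> complex"
  assumes "\<And>j. j \<notin> A \<Longrightarrow> f j = c"
  shows "(\<Sum>j\<in>UNIV. f j) = (\<Sum>j\<in>A. f j) + of_nat (CARD('q) - card A) * c"
proof -
  have "(\<Sum>j\<in>UNIV. f j) = (\<Sum>j\<in>UNIV - A. f j) + (\<Sum>j\<in>A. f j)"
    by (rule sum.subset_diff) auto
  also have "(\<Sum>j\<in>UNIV - A. f j) = (\<Sum>j\<in>UNIV - A. c)"
    using assms by (intro sum.cong) auto
  also have "\<dots> = of_nat (CARD('q) - card A) * c"
    by (simp add: card_Diff_subset)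
  finally show ?thesis by simp
qed

lemma trm_values:
  fixes M :: "'q::finite op" and A :: "'q set"
  assumes d: "\<And>S. M $ S $ S = g (S \<inter> A)"
  shows "trm M 0 = g {}"
    and "trm M CARD('q) = g A"
    and "trm M 1 = (\<Sum>j\<in>A. g {j}) + of_nat (CARD('q) - card A) * g {}"
    and "trm M (CARD('q) - 1) = (\<Sum>j\<in>A. g (A - {j})) + of_nat (CARD('q) - card A) * g A"
proof -
  show "trm M 0 = g {}" unfolding trm_def card0_sets by (simp add: d)
  show "trm M CARD('q) = g A" unfolding trm_def cardn_sets by (simp add: d)
  have "trm M 1 = (\<Sum>j\<in>UNIV. g ({j} \<inter> A))"
    unfolding trm_def card1_sets by (subst sum.reindex) (auto simp: inj_on_def d)
  also have "\<dots> = (\<Sum>j\<in>A. g ({j} \<inter> A)) + of_nat (CARD('q) - card A) * g {}"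
    by (rule sum_split_UNIV) auto
  also have "(\<Sum>j\<in>A. g ({j} \<inter> A)) = (\<Sum>j\<in>A. g {j})"
    by (rule sum.cong) auto
  finally show "trm M 1 = (\<Sum>j\<in>A. g {j}) + of_nat (CARD('q) - card A) * g {}" .
  have "trm M (CARD('q) - 1) = (\<Sum>j\<in>UNIV. g (-{j} \<inter> A))"
    unfolding trm_def cardn1_sets by (subst sum.reindex) (auto simp: inj_on_def d)
  also have "\<dots> = (\<Sum>j\<in>A. g (-{j} \<inter> A)) + of_nat (CARD('q) - card A) * g A"
  proof (rule sum_split_UNIV)
    fix j assume "j \<notin> A"
    then have "-{j} \<inter> A = A" by auto
    then show "g (-{j} \<inter> A) = g A" by simp
  qed
  also have "(\<Sum>j\<in>A. g (-{j} \<inter> A)) = (\<Sum>j\<in>A. g (A - {j}))"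
    by (rule sum.cong) (auto simp: Diff_eq Int_commute)
  finally show "trm M (CARD('q) - 1) = (\<Sum>j\<in>A. g (A - {j})) + of_nat (CARD('q) - card A) * g A" .
qed

lemma sum_Pow_insert:
  fixes f :: "'a set \<Rightarrow> complex"
  assumes "a \<notin> X" "finite X"
  shows "(\<Sum>T\<in>Pow (insert a X). f T) = (\<Sum>T\<in>Pow X. f T) + (\<Sum>T\<in>Pow X. f (insert a T))"
proof -
  have "(\<Sum>T\<in>Pow (insert a X). f T) = (\<Sum>T\<in>Pow X \<union> insert a ` Pow X. f T)"
    by (simp add: Pow_insert)
  also have "\<dots> = (\<Sum>T\<in>Pow X. f T) + (\<Sum>T\<in>insert a ` Pow X. f T)"
    using assms by (intro sum.union_disjoint) auto
  also have "(\<Sum>T\<in>insert a ` Pow X. f T) = (\<Sum>T\<in>Pow X. f (insert a T))"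
    using assms by (subst sum.reindex) (auto simp: inj_on_def)
  finally show ?thesis .
qed




lemma per_A:
  fixes M :: "'q::finite op" and A :: "'q set" and g :: "'q set \<Rightarrow> complex"
  assumes n3: "CARD('q) \<ge> 3" and cA: "card A \<le> 3"
    and d: "\<And>S. M $ S $ S = g (S \<inter> A)"
  shows "(\<Sum>S\<in>UNIV. M $ S $ S * c3 S) = of_nat (2^(CARD('q)-3)) *
     (trm M (CARD('q) - 1) - trm M 1 - of_nat (CARD('q) - 2) * (trm M CARD('q) - trm M 0))"
proof -
  note tv = trm_values[of M g A, OF d]
  have L: "(\<Sum>S\<in>UNIV. M $ S $ S * c3 S) =
    (if card A = 3 then of_nat (2^(CARD('q)-3)) * (\<Sum>T\<in>Pow A. (-1)^card T * g T) else 0)"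
    unfolding d by (rule lhs_formula[OF cA])
  define n where "n = CARD('q)"
  have n3': "n \<ge> 3" using n3 n_def by simp
  have R: "trm M (CARD('q) - 1) - trm M 1 - of_nat (CARD('q) - 2) * (trm M CARD('q) - trm M 0) =
     (\<Sum>j\<in>A. g (A - {j})) + of_nat (n - card A) * g A - ((\<Sum>j\<in>A. g {j}) + of_nat (n - card A) * g {})
     - of_nat (n - 2) * (g A - g {})"
    unfolding tv n_def by simp
  have "card A = 0 \<or> card A = 1 \<or> card A = 2 \<or> card A = 3" using cA by linarith
  then show ?thesis
  proof (elim disjE)
    assume c: "card A = 0"
    then have "A = {}" by simp
    then show ?thesis unfolding L R using c by simp
  next
    assume c: "card A = 1"
    then obtain a where A: "A = {a}" by (auto simp: card_1_singleton_iff)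
    have "n - 1 = Suc (n - 2)" using n3' by simp
    then have e: "(of_nat (n - 1) :: complex) = of_nat (n - 2) + 1" by simp
    show ?thesis unfolding L R c e using A by (simp add: algebra_simps)
  next
    assume c: "card A = 2"
    then obtain a b where A: "A = {a, b}" "a \<noteq> b" by (auto simp: card_2_iff)
    have "{a, b} - {a} = {b}" "{a, b} - {b} = {a}" using A by auto
    then show ?thesis unfolding L R c using A by (simp add: algebra_simps)
  next
    assume c: "card A = 3"
    then obtain a b e where A: "A = {a, b, e}" "a \<noteq> b" "b \<noteq> e" "a \<noteq> e" by (auto simp: card_3_iff)
    have diffs: "{a, b, e} - {a} = {b, e}" "{a, b, e} - {b} = {a, e}" "{a, b, e} - {e} = {a, b}"
      using A by auto
    have P: "(\<Sum>T\<in>Pow A. (-1)^card T * g T) =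
       g {} - g {a} - g {b} - g {e} + g {a,b} + g {a,e} + g {b,e} - g {a,b,e}"
      using A by (simp add: sum_Pow_insert insert_commute)
    have "n - 2 = Suc (n - 3)" using n3' by simp
    then have e: "(of_nat (n - 2) :: complex) = of_nat (n - 3) + 1" by simp
    show ?thesis unfolding L R P c e using A diffs by (simp add: algebra_simps insert_commute)
  qed
qed

lemma trm_sum: "trm (sum F X) m = (\<Sum>A\<in>X. trm (F A) m)"
  unfolding trm_def by (simp add: sum_component sum.swap[of _ X])

lemma comb_main:
  fixes M :: "'q::finite op"
  assumes n3: "CARD('q) \<ge> 3" and loc: "k_local 3 M"
  shows "trace (M ** C_op 3) = of_nat (2^(CARD('q)-3)) *
     (trm M (CARD('q) - 1) - trm M 1 - of_nat (CARD('q) - 2) * (trm M CARD('q) - trm M 0))"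
proof -
  obtain F where F: "\<And>A. acts_within A (F A)" and M: "M = (\<Sum>A\<in>{A. card A \<le> 3}. F A)"
    using loc unfolding k_local_def by blast
  let ?X = "{A::'q set. card A \<le> 3}"
  let ?E = "\<lambda>M::'q op. of_nat (2^(CARD('q)-3)) *
     (trm M (CARD('q) - 1) - trm M 1 - of_nat (CARD('q) - 2) * (trm M CARD('q) - trm M 0))"
  have each: "(\<Sum>S\<in>UNIV. F A $ S $ S * c3 S) = ?E (F A)" if "A \<in> ?X" for A
  proof -
    obtain f where f: "\<And>S S'. F A $ S $ S' = (if S - A = S' - A then f (S \<inter> A) (S' \<inter> A) else 0)"
      using F[of A] unfolding acts_within_def by blast
    have d: "\<And>S. F A $ S $ S = (\<lambda>T. f T T) (S \<inter> A)" by (simp add: f)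
    show ?thesis using per_A[OF n3 _ d] that by simp
  qed
  have "trace (M ** C_op 3) = (\<Sum>S\<in>UNIV. M $ S $ S * c3 S)" by (rule trace_C3)
  also have "\<dots> = (\<Sum>A\<in>?X. \<Sum>S\<in>UNIV. F A $ S $ S * c3 S)"
    unfolding M by (simp add: sum_component sum_distrib_right sum.swap[of _ UNIV])
  also have "\<dots> = (\<Sum>A\<in>?X. ?E (F A))" by (rule sum.cong[OF refl]) (rule each)
  also have "\<dots> = ?E M"
    unfolding M trm_sum by (simp add: sum_distrib_left sum_subtractf right_diff_distrib)
  finally show ?thesis .
qed




definition ldet :: "'a set \<Rightarrow> ('a \<Rightarrow> 'a \<Rightarrow> complex) \<Rightarrow> complex" where
  "ldet X A = (\<Sum>p\<in>{p. p permutes X}. of_int (sign p) * (\<Prod>S\<in>X. A S (p S)))"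

lemma block_det_ldet: "block_det V m = ldet {S. card S = m} (\<lambda>S T. V $ S $ T)"
  unfolding block_det_def ldet_def ..

lemma ldet_alt:
  assumes X: "finite X" and ab: "a \<in> X" "b \<in> X" "a \<noteq> b" and eq: "A a = A b"
  shows "ldet X A = 0"
proof -
  define \<tau> where "\<tau> = Transposition.transpose a b"
  have \<tau>p: "\<tau> permutes X" unfolding \<tau>_def using ab by (simp add: permutes_swap_id)
  have \<tau>\<tau>: "\<tau> (\<tau> x) = x" for x unfolding \<tau>_def by simp
  have Aeq: "A (\<tau> U) = A U" for U unfolding \<tau>_def using eq by (auto simp: Transposition.transpose_def)
  let ?P = "{p. p permutes X}"
  define f where "f = (\<lambda>p. of_int (sign p) * (\<Prod>S\<in>X. A S (p S)))"
  have bij: "bij_betw (\<lambda>p. p \<circ> \<tau>) ?P ?P"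
    by (rule bij_betw_byWitness[where f'="\<lambda>p. p \<circ> \<tau>"])
       (auto simp: \<tau>\<tau> fun_eq_iff intro: permutes_compose[OF \<tau>p])
  have fp: "f (p \<circ> \<tau>) = - f p" if p: "p \<in> ?P" for p
  proof -
    have perm: "permutation p" using p X by (auto simp: permutation_permutes)
    have permt: "permutation \<tau>" using \<tau>p X by (auto simp: permutation_permutes)
    have s: "sign (p \<circ> \<tau>) = - sign p"
      using sign_compose[OF perm permt] ab by (simp add: \<tau>_def sign_swap_id)
    have bt: "bij_betw \<tau> X X" using \<tau>p by (rule permutes_imp_bij)
    have "(\<Prod>S\<in>X. A S ((p \<circ> \<tau>) S)) = (\<Prod>S\<in>X. (\<lambda>U. A (\<tau> U) (p U)) (\<tau> S))"
      by (simp add: \<tau>\<tau>)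
    also have "\<dots> = (\<Prod>S\<in>X. A (\<tau> S) (p S))"
      by (rule prod.reindex_bij_betw[OF bt])
    also have "\<dots> = (\<Prod>S\<in>X. A S (p S))" by (simp add: Aeq)
    finally show ?thesis unfolding f_def using s by simp
  qed
  have "sum f ?P = sum (\<lambda>p. f (p \<circ> \<tau>)) ?P"
    using sum.reindex_bij_betw[OF bij, of f] by simp
  also have "\<dots> = - sum f ?P" by (simp add: fp sum_negf)
  finally have "sum f ?P = 0" by simp
  then show ?thesis unfolding ldet_def f_def .
qed

lemma ldet_upd:
  assumes X: "finite X" and a: "a \<in> X"
  shows "ldet X (A(a := r)) = (\<Sum>p\<in>{p. p permutes X}. of_int (sign p) * (r (p a) * (\<Prod>S\<in>X-{a}. A S (p S))))"
  unfolding ldet_def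
proof (rule sum.cong[OF refl])
  fix p
  have "(\<Prod>S\<in>X. (A(a := r)) S (p S)) = (A(a := r)) a (p a) * (\<Prod>S\<in>X-{a}. (A(a := r)) S (p S))"
    using X a by (simp add: prod.remove)
  also have "(\<Prod>S\<in>X-{a}. (A(a := r)) S (p S)) = (\<Prod>S\<in>X-{a}. A S (p S))"
    by (rule prod.cong) auto
  finally show "of_int (sign p) * (\<Prod>S\<in>X. (A(a := r)) S (p S)) = of_int (sign p) * (r (p a) * (\<Prod>S\<in>X-{a}. A S (p S)))"
    by simp
qed

lemma ldet_row_lin:
  assumes X: "finite X" and a: "a \<in> X"
  shows "ldet X (A(a := (\<lambda>T. \<Sum>k\<in>K. c k * R k T))) = (\<Sum>k\<in>K. c k * ldet X (A(a := R k)))"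
  unfolding ldet_upd[OF X a]
  by (simp add: sum_distrib_left sum_distrib_right sum.swap[of _ K] algebra_simps)

lemma ldet_row_comb:
  assumes X: "finite X" and a: "a \<in> X"
  shows "ldet X (A(a := (\<lambda>T. \<Sum>k\<in>X. c k * A k T))) = c a * ldet X A"
proof -
  have "ldet X (A(a := (\<lambda>T. \<Sum>k\<in>X. c k * A k T))) = (\<Sum>k\<in>X. c k * ldet X (A(a := A k)))"
    by (rule ldet_row_lin[OF X a])
  also have "\<dots> = (\<Sum>k\<in>X. if k = a then c a * ldet X A else 0)"
  proof (rule sum.cong[OF refl])
    fix k assume k: "k \<in> X"
    show "c k * ldet X (A(a := A k)) = (if k = a then c a * ldet X A else 0)"
    proof (cases "k = a")
      case True then show ?thesis by simp
    next
      case False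
      have "ldet X (A(a := A k)) = 0"
        by (rule ldet_alt[OF X a k]) (use False in auto)
      then show ?thesis using False by simp
    qed
  qed
  also have "\<dots> = c a * ldet X A" using a X by (simp add: sum.delta')
  finally show ?thesis .
qed

lemma ldet_id:
  assumes X: "finite X"
  shows "ldet X (\<lambda>S T. if S = T then 1 else 0) = 1"
proof -
  let ?P = "{p. p permutes X}"
  have "ldet X (\<lambda>S T. if S = T then 1 else 0) =
      (\<Sum>p\<in>?P. if p = id then 1 else 0)"
    unfolding ldet_def
  proof (rule sum.cong[OF refl])
    fix p assume p: "p \<in> ?P"
    show "of_int (sign p) * (\<Prod>S\<in>X. if S = p S then 1 else 0) = (if p = id then 1 else (0::complex))"
    proof (cases "p = id")
      case True then show ?thesis by simp
    next
      case False
      then obtain S where "p S \<noteq> S" by (auto simp: fun_eq_iff)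
      then have "S \<in> X" using p permutes_not_in by fastforce
      then have "(\<Prod>S\<in>X. if S = p S then 1 else (0::complex)) = 0"
        using X \<open>p S \<noteq> S\<close> by (intro prod_zero) (auto intro!: bexI[of _ S])
      then show ?thesis using False by simp
    qed
  qed
  also have "\<dots> = 1" by (subst sum.delta) (auto simp: X permutes_id finite_permutations)
  finally show ?thesis .
qed

lemma vd_prod:
  fixes f :: "'i \<Rightarrow> real \<Rightarrow> complex"
  assumes "finite I" "\<And>i. i \<in> I \<Longrightarrow> (f i has_vector_derivative f' i) (at x within s)"
  shows "((\<lambda>t. \<Prod>i\<in>I. f i t) has_vector_derivative (\<Sum>i\<in>I. f' i * (\<Prod>j\<in>I-{i}. f j x))) (at x within s)"
  using assms
proof (induction I rule: finite_induct)
  case empty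
  then show ?case by (simp add: has_vector_derivative_const)
next
  case (insert i I)
  have d: "((\<lambda>t. f i t * (\<Prod>i\<in>I. f i t)) has_vector_derivative
      (f i x * (\<Sum>k\<in>I. f' k * (\<Prod>j\<in>I-{k}. f j x)) + f' i * (\<Prod>j\<in>I. f j x))) (at x within s)"
    using insert by (intro has_vector_derivative_mult) auto
  have e: "f i x * (\<Sum>k\<in>I. f' k * (\<Prod>j\<in>I-{k}. f j x)) + f' i * (\<Prod>j\<in>I. f j x) =
        (\<Sum>k\<in>insert i I. f' k * (\<Prod>j\<in>insert i I-{k}. f j x))"
  proof -
    have "(\<Sum>k\<in>insert i I. f' k * (\<Prod>j\<in>insert i I-{k}. f j x)) =
        f' i * (\<Prod>j\<in>I. f j x) + (\<Sum>k\<in>I. f' k * (\<Prod>j\<in>insert i I-{k}. f j x))"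
      using insert by (simp add: insert_Diff_if)
    also have "(\<Sum>k\<in>I. f' k * (\<Prod>j\<in>insert i I-{k}. f j x)) = (\<Sum>k\<in>I. f i x * (f' k * (\<Prod>j\<in>I-{k}. f j x)))"
    proof (rule sum.cong[OF refl])
      fix k assume k: "k \<in> I"
      then have "insert i I - {k} = insert i (I - {k})" using insert by auto
      then show "f' k * (\<Prod>j\<in>insert i I-{k}. f j x) = f i x * (f' k * (\<Prod>j\<in>I-{k}. f j x))"
        using insert by simp
    qed
    finally show ?thesis by (simp add: sum_distrib_left)
  qed
  show ?case using d insert by (simp add: e)
qed

lemma ldet_deriv:
  fixes F :: "real \<Rightarrow> 'a \<Rightarrow> 'a \<Rightarrow> complex"
  assumes X: "finite X"
    and d: "\<And>S T. ((\<lambda>t. F t S T) has_vector_derivative F' S T) (at x within s)"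
  shows "((\<lambda>t. ldet X (F t)) has_vector_derivative (\<Sum>a\<in>X. ldet X ((F x)(a := F' a)))) (at x within s)"
proof -
  let ?P = "{p. p permutes X}"
  have fin: "finite ?P" using X by (rule finite_permutations)
  have "((\<lambda>t. \<Sum>p\<in>?P. of_int (sign p) * (\<Prod>S\<in>X. F t S (p S))) has_vector_derivative
     (\<Sum>p\<in>?P. of_int (sign p) * (\<Sum>a\<in>X. F' a (p a) * (\<Prod>S\<in>X-{a}. F x S (p S))))) (at x within s)"
    by (intro has_vector_derivative_sum has_vector_derivative_mult_right vd_prod X d)
  also have "(\<Sum>p\<in>?P. of_int (sign p) * (\<Sum>a\<in>X. F' a (p a) * (\<Prod>S\<in>X-{a}. F x S (p S)))) =
      (\<Sum>a\<in>X. ldet X ((F x)(a := F' a)))"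
    by (simp add: ldet_upd[OF X] sum_distrib_left sum.swap[of _ X])
  finally show ?thesis unfolding ldet_def .
qed




lemma ev_at_open:
  fixes x :: "'a::topological_space"
  assumes "open S" "x \<in> S"
  shows "eventually (\<lambda>y. y \<in> S) (at x within T)"
  using assms by (simp add: eventually_at_filter eventually_mono[OF eventually_nhds_in_open[OF assms]])

lemma one_side_left:
  fixes h :: "real \<Rightarrow> complex"
  assumes ux: "u < x" and c: "continuous_on {u..<x} h" and l: "(h \<longlongrightarrow> l) (at x within {u..<x})"
  shows "h integrable_on {u..x}"
proof -
  define g where "g = (\<lambda>y. if y = x then l else h y)"
  have "continuous_on {u..x} g"
  proof (rule continuous_on_IccI[OF _ _ _ ux])
    have e1: "at u within {u..<x} = at_right u"
      by (rule at_within_nhd[where S="{..<x}"]) (use ux in auto)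
    have "(h \<longlongrightarrow> h u) (at u within {u..<x})"
      using c ux by (simp add: continuous_on_def)
    then have "(h \<longlongrightarrow> h u) (at_right u)" using e1 by simp
    moreover have "eventually (\<lambda>y. h y = g y) (at_right u)"
      by (rule eventually_mono[OF ev_at_open[of "{..<x}" u "{u<..}"]]) (use ux in \<open>auto simp: g_def\<close>)
    ultimately show "(g \<longlongrightarrow> g u) (at_right u)"
      using ux by (auto simp: g_def intro: tendsto_cong[THEN iffD1])
  next
    have e1: "at x within {u..<x} = at_left x"
      by (rule at_within_nhd[where S="{u<..}"]) (use ux in auto)
    have "(h \<longlongrightarrow> l) (at_left x)" using l e1 by simp
    moreover have "eventually (\<lambda>y. h y = g y) (at_left x)"
      by (auto simp: g_def eventually_at_filter)
    ultimately show "(g \<longlongrightarrow> g x) (at_left x)"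
      by (auto simp: g_def intro: tendsto_cong[THEN iffD1])
  next
    fix y assume y: "u < y" "y < x"
    have e1: "at y within {u..<x} = at y"
      by (rule at_within_open_subset[where S="{u<..<x}"]) (use y in auto)
    have "(h \<longlongrightarrow> h y) (at y within {u..<x})"
      using c y by (simp add: continuous_on_def)
    then have "(h \<longlongrightarrow> h y) (at y)" using e1 by simp
    moreover have "eventually (\<lambda>z. h z = g z) (at y)"
      by (rule eventually_mono[OF ev_at_open[of "{..<x}" y UNIV]]) (use y in \<open>auto simp: g_def\<close>)
    ultimately show "(g \<longlongrightarrow> g y) (at y)"
      using y by (auto simp: g_def intro: tendsto_cong[THEN iffD1])
  qed
  then have gi: "g integrable_on {u..x}" by (rule integrable_continuous_interval)
  show ?thesis
  proof (rule integrable_spike_finite[where S="{x}" and T="{u..x}" and g=h and f=g])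
    fix y assume "y \<in> {u..x} - {x}" then show "h y = g y" by (simp add: g_def)
  qed (use gi in auto)
qed

lemma one_side_right:
  fixes h :: "real \<Rightarrow> complex"
  assumes xv: "x < v" and c: "continuous_on {x<..v} h" and r: "(h \<longlongrightarrow> r) (at x within {x<..v})"
  shows "h integrable_on {x..v}"
proof -
  define g where "g = (\<lambda>y. if y = x then r else h y)"
  have "continuous_on {x..v} g"
  proof (rule continuous_on_IccI[OF _ _ _ xv])
    have e1: "at x within {x<..v} = at_right x"
      by (rule at_within_nhd[where S="{..<v}"]) (use xv in auto)
    have "(h \<longlongrightarrow> r) (at_right x)" using r e1 by simp
    moreover have "eventually (\<lambda>y. h y = g y) (at_right x)"
      by (auto simp: g_def eventually_at_filter)
    ultimately show "(g \<longlongrightarrow> g x) (at_right x)"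
      by (auto simp: g_def intro: tendsto_cong[THEN iffD1])
  next
    have e1: "at v within {x<..v} = at_left v"
      by (rule at_within_nhd[where S="{x<..}"]) (use xv in auto)
    have "(h \<longlongrightarrow> h v) (at v within {x<..v})"
      using c xv by (simp add: continuous_on_def)
    then have "(h \<longlongrightarrow> h v) (at_left v)" using e1 by simp
    moreover have "eventually (\<lambda>y. h y = g y) (at_left v)"
      by (rule eventually_mono[OF ev_at_open[of "{x<..}" v "{..<v}"]]) (use xv in \<open>auto simp: g_def\<close>)
    ultimately show "(g \<longlongrightarrow> g v) (at_left v)"
      using xv by (auto simp: g_def intro: tendsto_cong[THEN iffD1])
  next
    fix y assume y: "x < y" "y < v"
    have e1: "at y within {x<..v} = at y"
      by (rule at_within_open_subset[where S="{x<..<v}"]) (use y in auto)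
    have "(h \<longlongrightarrow> h y) (at y within {x<..v})"
      using c y by (simp add: continuous_on_def)
    then have "(h \<longlongrightarrow> h y) (at y)" using e1 by simp
    moreover have "eventually (\<lambda>z. h z = g z) (at y)"
      by (rule eventually_mono[OF ev_at_open[of "{x<..}" y UNIV]]) (use y in \<open>auto simp: g_def\<close>)
    ultimately show "(g \<longlongrightarrow> g y) (at y)"
      using y by (auto simp: g_def intro: tendsto_cong[THEN iffD1])
  qed
  then have gi: "g integrable_on {x..v}" by (rule integrable_continuous_interval)
  show ?thesis
  proof (rule integrable_spike_finite[where S="{x}" and T="{x..v}" and g=h and f=g])
    fix y assume "y \<in> {x..v} - {x}" then show "h y = g y" by (simp add: g_def)
  qed (use gi in auto)
qed




lemma pc_integrable:
  fixes h :: "real \<Rightarrow> complex"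
  assumes pc: "piecewise_continuous T h"
  shows "h integrable_on {0..T}"
proof -
  obtain D where D: "finite D" "D \<subseteq> {0..T}" and c: "continuous_on ({0..T} - D) h"
    and lim: "\<And>s. s \<in> D \<Longrightarrow> (\<exists>l. (h \<longlongrightarrow> l) (at s within {0..<s})) \<and> (\<exists>r. (h \<longlongrightarrow> r) (at s within {s<..T}))"
    using pc unfolding piecewise_continuous_def by blast
  have "h integrable_on cbox 0 T"
  proof (rule integrable_on_little_subintervals, intro ballI)
    fix x assume x: "x \<in> cbox 0 T"
    obtain \<delta> where \<delta>: "\<delta> > 0" "\<And>y. y \<in> D \<Longrightarrow> y \<noteq> x \<Longrightarrow> \<delta> \<le> dist x y"
      using finite_set_avoid[OF D(1), of x] by blast
    show "\<exists>d>0. \<forall>u v. x \<in> cbox u v \<and> cbox u v \<subseteq> ball x d \<and> cbox u v \<subseteq> cbox 0 T \<longrightarrow> h integrable_on cbox u v"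
    proof (intro exI[of _ \<delta>] conjI allI impI \<delta>(1), elim conjE)
      fix u v assume xuv: "x \<in> cbox u v" and sub1: "cbox u v \<subseteq> ball x \<delta>" and sub2: "cbox u v \<subseteq> cbox 0 T"
      have xuv': "u \<le> x" "x \<le> v" using xuv by auto
      have avoid: "y \<notin> D" if "y \<in> {u..v}" "y \<noteq> x" for y
      proof
        assume "y \<in> D"
        then have "\<delta> \<le> dist x y" using \<delta>(2) that by blast
        moreover have "y \<in> ball x \<delta>" using sub1 that by auto
        ultimately show False by simp
      qed
      have sub3: "{u..v} \<subseteq> {0..T}" using sub2 by simp
      have left: "h integrable_on {u..x}"
      proof (cases "u = x")
        case True then show ?thesis using integrable_on_refl[of h x] by simp
      next
        case False
        then have ux: "u < x" using xuv' by simp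
        have ss: "{u..<x} \<subseteq> {0..T} - D" using avoid sub3 xuv' by fastforce
        have cl: "continuous_on {u..<x} h" using continuous_on_subset[OF c ss] .
        have "\<exists>l. (h \<longlongrightarrow> l) (at x within {u..<x})"
        proof (cases "x \<in> D")
          case True
          then obtain l where "(h \<longlongrightarrow> l) (at x within {0..<x})" using lim by blast
          moreover have "{u..<x} \<subseteq> {0..<x}" using sub3 xuv' by auto
          ultimately show ?thesis by (blast intro: tendsto_within_subset)
        next
          case False
          then have "x \<in> {0..T} - D" using x by simp
          then have "(h \<longlongrightarrow> h x) (at x within ({0..T} - D))"
            using c by (simp add: continuous_on_def)
          then show ?thesis using ss by (blast intro: tendsto_within_subset)
        qed
        then obtain l where "(h \<longlongrightarrow> l) (at x within {u..<x})" by blast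
        then show ?thesis by (rule one_side_left[OF ux cl])
      qed
      have right: "h integrable_on {x..v}"
      proof (cases "x = v")
        case True then show ?thesis using integrable_on_refl[of h x] by simp
      next
        case False
        then have xv: "x < v" using xuv' by simp
        have ss: "{x<..v} \<subseteq> {0..T} - D" using avoid sub3 xuv' by fastforce
        have cl: "continuous_on {x<..v} h" using continuous_on_subset[OF c ss] .
        have "\<exists>r. (h \<longlongrightarrow> r) (at x within {x<..v})"
        proof (cases "x \<in> D")
          case True
          then obtain r where "(h \<longlongrightarrow> r) (at x within {x<..T})" using lim by blast
          moreover have "{x<..v} \<subseteq> {x<..T}" using sub3 xuv' by auto
          ultimately show ?thesis by (blast intro: tendsto_within_subset)
        next
          case False
          then have "x \<in> {0..T} - D" using x by simp
          then have "(h \<longlongrightarrow> h x) (at x within ({0..T} - D))"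
            using c by (simp add: continuous_on_def)
          then show ?thesis using ss by (blast intro: tendsto_within_subset)
        qed
        then obtain r where "(h \<longlongrightarrow> r) (at x within {x<..v})" by blast
        then show ?thesis by (rule one_side_right[OF xv cl])
      qed
      show "h integrable_on cbox u v"
        using Henstock_Kurzweil_Integration.integrable_combine[OF xuv' left right] by simp
    qed
  qed
  then show ?thesis by simp
qed

lemma pc_compose:
  fixes f :: "real \<Rightarrow> 'a::metric_space" and g :: "'a \<Rightarrow> 'b::metric_space"
  assumes pc: "piecewise_continuous T f" and g: "continuous_on UNIV g"
  shows "piecewise_continuous T (\<lambda>t. g (f t))"
proof -
  obtain D where D: "finite D" "D \<subseteq> {0..T}" and c: "continuous_on ({0..T} - D) f"
    and lim: "\<And>s. s \<in> D \<Longrightarrow> (\<exists>l. (f \<longlongrightarrow> l) (at s within {0..<s})) \<and> (\<exists>r. (f \<longlongrightarrow> r) (at s within {s<..T}))"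
    using pc unfolding piecewise_continuous_def by blast
  have gc: "isCont g y" for y using g by (simp add: continuous_on_eq_continuous_at)
  have c2: "continuous_on ({0..T} - D) (\<lambda>t. g (f t))"
    by (rule continuous_on_compose2[OF g c]) auto
  have l2: "(\<exists>l. ((\<lambda>t. g (f t)) \<longlongrightarrow> l) (at s within {0..<s})) \<and> (\<exists>r. ((\<lambda>t. g (f t)) \<longlongrightarrow> r) (at s within {s<..T}))"
    if s: "s \<in> D" for s
  proof -
    obtain l r where "(f \<longlongrightarrow> l) (at s within {0..<s})" "(f \<longlongrightarrow> r) (at s within {s<..T})"
      using lim[OF s] by blast
    then show ?thesis using isCont_tendsto_compose[OF gc] by blast
  qed
  show ?thesis unfolding piecewise_continuous_def using D c2 l2 by blast
qed




lemma totalZ_entry: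
  "totalZ $ S $ S' = (if S = S' then of_nat CARD('q) - 2 * of_nat (card S) else (0::complex))"
  for S S' :: "'q::finite set"
proof (cases "S = S'")
  case True
  have "totalZ $ S $ S = (\<Sum>j\<in>UNIV. if j \<in> S then -1 else (1::complex))"
    unfolding totalZ_def pauliZ_def by (simp add: sum_component)
  also have "\<dots> = (\<Sum>j\<in>S. if j \<in> S then -1 else (1::complex)) + of_nat (CARD('q) - card S) * 1"
    by (rule sum_split_UNIV) auto
  also have "\<dots> = of_nat CARD('q) - 2 * of_nat (card S)"
    by (simp add: of_nat_diff card_mono)
  finally show ?thesis using True by simp
next
  case False
  then show ?thesis unfolding totalZ_def pauliZ_def by (simp add: sum_component)
qed

lemma u1_block:
  fixes M :: "'q::finite op"
  assumes u: "u1_invariant M" and c: "card S \<noteq> card S'"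
  shows "M $ S $ S' = 0"
proof -
  have "(M ** totalZ) $ S $ S' = (totalZ ** M) $ S $ S'" using u unfolding u1_invariant_def by simp
  moreover have "(M ** totalZ) $ S $ S' = M $ S $ S' * (of_nat CARD('q) - 2 * of_nat (card S'))"
  proof -
    have "(M ** totalZ) $ S $ S' = (\<Sum>k\<in>UNIV. if k = S' then M $ S $ k * (of_nat CARD('q) - 2 * of_nat (card k)) else 0)"
      unfolding matrix_matrix_mult_def vec_lambda_beta by (rule sum.cong) (auto simp: totalZ_entry)
    then show ?thesis by (simp add: sum.delta')
  qed
  moreover have "(totalZ ** M) $ S $ S' = (of_nat CARD('q) - 2 * of_nat (card S)) * M $ S $ S'"
  proof -
    have "(totalZ ** M) $ S $ S' = (\<Sum>k\<in>UNIV. if k = S then (of_nat CARD('q) - 2 * of_nat (card k)) * M $ k $ S' else 0)"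
      unfolding matrix_matrix_mult_def vec_lambda_beta by (rule sum.cong) (auto simp: totalZ_entry)
    then show ?thesis by (simp add: sum.delta')
  qed
  ultimately have "M $ S $ S' * (of_nat CARD('q) - 2 * of_nat (card S')) = (of_nat CARD('q) - 2 * of_nat (card S)) * M $ S $ S'"
    by simp
  then have "M $ S $ S' * (2 * of_nat (card S) - 2 * of_nat (card S')) = 0"
    by (simp add: algebra_simps)
  moreover have "(2 * of_nat (card S) - 2 * of_nat (card S') :: complex) \<noteq> 0"
    using c by simp
  ultimately show ?thesis by simp
qed

lemma cont_trm: "continuous_on UNIV (\<lambda>M::'q::finite op. trm M m)"
  unfolding trm_def
  by (intro continuous_on_sum) (auto intro!: linear_continuous_on bounded_linear_compose[OF bounded_linear_vec_nth bounded_linear_vec_nth])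

lemma isCont_trm: "isCont H x \<Longrightarrow> isCont (\<lambda>s. trm (H s) m) x"
  unfolding trm_def by (intro continuous_intros) simp




lemma det_formula:
  fixes H V :: "real \<Rightarrow> 'q::finite op" and T :: real
  assumes T0: "0 \<le> T" and pc: "piecewise_continuous T H"
    and u1: "\<forall>t\<in>{0..T}. u1_invariant (H t)"
    and V: "time_ordered_exp T H V"
  shows "block_det (V T) m = exp (- \<i> * integral {0..T} (\<lambda>s. trm (H s) m))"
proof -
  define X where "X = {S::'q set. card S = m}"
  have finX: "finite X" by simp
  define G where "G = (\<lambda>s. \<chi> a b. - \<i> * (H s ** V s) $ a $ b)"
  have Vc: "continuous_on {0..T} V" and Vi: "\<And>t. t \<in> {0..T} \<Longrightarrow> (G has_integral (V t - mat 1)) {0..t}"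
    using V unfolding time_ordered_exp_def G_def by auto
  define g where "g = (\<lambda>S S' s. G s $ S $ S')"
  have gi: "(g S S' has_integral (V t $ S $ S' - (if S = S' then 1 else 0))) {0..t}" if "t \<in> {0..T}" for S S' t
  proof -
    have bl: "bounded_linear (\<lambda>M::'q op. M $ S $ S')"
      by (rule bounded_linear_compose[OF bounded_linear_vec_nth bounded_linear_vec_nth])
    have "((\<lambda>M. M $ S $ S') \<circ> G has_integral (\<lambda>M. M $ S $ S') (V t - mat 1)) {0..t}"
      by (rule has_integral_linear[OF Vi[OF that] bl])
    then show ?thesis by (simp add: g_def o_def mat_def)
  qed
  have gint: "g S S' integrable_on {0..T}" for S S' using gi[of T S S'] T0 by auto
  define E where "E = (\<lambda>t S S'. (if S = S' then 1 else 0) + integral {0..t} (g S S'))"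
  have EV: "E t S S' = V t $ S $ S'" if "t \<in> {0..T}" for t S S'
    using integral_unique[OF gi[OF that, of S S']] by (simp add: E_def)
  obtain D where D: "finite D" "D \<subseteq> {0..T}" and cH: "continuous_on ({0..T} - D) H"
    using pc unfolding piecewise_continuous_def by blast
  define K where "K = D \<union> {0, T}"
  have finK: "finite K" using D by (simp add: K_def)
  have int_pt: "x \<in> {0<..<T} \<and> isCont H x \<and> isCont V x" if "x \<in> {0..T} - K" for x
  proof -
    have x: "x \<in> {0<..<T} - D" using that by (auto simp: K_def)
    have op: "open ({0<..<T} - D)" using D by (simp add: open_Diff finite_imp_closed)
    have "x \<in> interior ({0..T} - D)"
      by (rule interiorI[OF op x]) auto
    then have "isCont H x" by (rule continuous_on_interior[OF cH])
    moreover have "isCont V x"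
      by (rule continuous_on_interior[OF Vc]) (use x in \<open>simp add: interior_atLeastAtMost_real\<close>)
    ultimately show ?thesis using x by simp
  qed
  have gform: "g S S' = (\<lambda>s. - \<i> * (\<Sum>k\<in>UNIV. H s $ S $ k * V s $ k $ S'))" for S S'
    by (simp add: g_def G_def matrix_matrix_mult_def fun_eq_iff)
  have gcont: "isCont (g S S') x" if "isCont H x" "isCont V x" for S S' x
    unfolding gform by (intro continuous_intros) (simp_all add: that)
  have deriv_int: "((\<lambda>u. integral {0..u} f) has_vector_derivative f x) (at x)"
    if fi: "f integrable_on {0..T}" and x: "x \<in> {0<..<T}" and fc: "isCont f x" for f :: "real \<Rightarrow> complex" and x
  proof -
    have "((\<lambda>u. integral {0..u} f) has_vector_derivative f x) (at x within ({0..T} - {}))"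
      by (rule integral_has_vector_derivative_continuous_at[OF fi])
         (use x fc in \<open>auto intro: continuous_at_imp_continuous_within\<close>)
    moreover have "x \<in> interior {0..T}" using x by simp
    then have "at x within ({0..T} - {}) = at x"
      by (metis Diff_empty at_within_interior)
    ultimately show ?thesis by metis
  qed
  have Eder: "((\<lambda>t. E t S S') has_vector_derivative g S S' x) (at x)" if x: "x \<in> {0..T} - K" for S S' x
  proof -
    have "((\<lambda>u. integral {0..u} (g S S')) has_vector_derivative g S S' x) (at x)"
      using deriv_int[OF gint] int_pt[OF x] gcont by blast
    then show ?thesis unfolding E_def
      using has_vector_derivative_add[OF has_vector_derivative_const] by fastforce
  qed
  define Dt where "Dt = (\<lambda>t. ldet X (E t))"
  have Hblk: "H x $ a $ k = 0" if "x \<in> {0..T}" "a \<in> X" "k \<notin> X" for x a k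
    using u1_block[OF u1[rule_format, OF that(1)]] that by (auto simp: X_def)
  have Dder: "(Dt has_vector_derivative (- \<i> * trm (H x) m * Dt x)) (at x)" if x: "x \<in> {0..T} - K" for x
  proof -
    have xin: "x \<in> {0..T}" using x by simp
    have "(Dt has_vector_derivative (\<Sum>a\<in>X. ldet X ((E x)(a := (\<lambda>S'. g a S' x))))) (at x)"
      unfolding Dt_def by (rule ldet_deriv[OF finX Eder[OF x]])
    also have "(\<Sum>a\<in>X. ldet X ((E x)(a := (\<lambda>S'. g a S' x)))) = (\<Sum>a\<in>X. (- \<i> * H x $ a $ a) * Dt x)"
    proof (rule sum.cong[OF refl])
      fix a assume a: "a \<in> X"
      have row: "(\<lambda>S'. g a S' x) = (\<lambda>S'. \<Sum>k\<in>X. (- \<i> * H x $ a $ k) * E x k S')"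
      proof
        fix S'
        have "g a S' x = - \<i> * (\<Sum>k\<in>UNIV. H x $ a $ k * V x $ k $ S')" by (simp add: gform)
        also have "(\<Sum>k\<in>UNIV. H x $ a $ k * V x $ k $ S') = (\<Sum>k\<in>X. H x $ a $ k * V x $ k $ S')"
          by (rule sum.mono_neutral_right) (use Hblk[OF xin a] in auto)
        also have "\<dots> = (\<Sum>k\<in>X. H x $ a $ k * E x k S')" using EV[OF xin] by simp
        finally show "g a S' x = (\<Sum>k\<in>X. (- \<i> * H x $ a $ k) * E x k S')"
          by (simp add: sum_distrib_left algebra_simps)
      qed
      show "ldet X ((E x)(a := (\<lambda>S'. g a S' x))) = (- \<i> * H x $ a $ a) * Dt x"
        unfolding row Dt_def by (rule ldet_row_comb[OF finX a, of "E x" "\<lambda>k. - \<i> * H x $ a $ k"])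
    qed
    also have "\<dots> = - \<i> * trm (H x) m * Dt x"
      by (simp only: trm_def X_def sum_distrib_right sum_distrib_left)
    finally show ?thesis .
  qed
  define \<Psi> where "\<Psi> = (\<lambda>t. integral {0..t} (\<lambda>s. trm (H s) m))"
  have trint: "(\<lambda>s. trm (H s) m) integrable_on {0..T}"
    by (rule pc_integrable[OF pc_compose[OF pc cont_trm]])
  have \<Psi>der: "(\<Psi> has_vector_derivative trm (H x) m) (at x)" if x: "x \<in> {0..T} - K" for x
    unfolding \<Psi>_def using deriv_int[OF trint] int_pt[OF x] isCont_trm by blast
  define Kf where "Kf = (\<lambda>t. Dt t * exp (\<i> * \<Psi> t))"
  have Kder: "(Kf has_derivative (\<lambda>h. 0)) (at x within {0..T})" if x: "x \<in> {0..T} - K" for x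
  proof -
    have ed: "((\<lambda>z. exp (\<i> * z)) has_field_derivative (\<i> * exp (\<i> * \<Psi> x))) (at (\<Psi> x))"
      by (auto intro!: derivative_eq_intros)
    have e: "((\<lambda>t. exp (\<i> * \<Psi> t)) has_vector_derivative trm (H x) m * (\<i> * exp (\<i> * \<Psi> x))) (at x)"
      using field_vector_diff_chain_at[OF \<Psi>der[OF x] ed] by (simp add: o_def)
    have "(Kf has_vector_derivative (Dt x * (trm (H x) m * (\<i> * exp (\<i> * \<Psi> x))) + (- \<i> * trm (H x) m * Dt x) * exp (\<i> * \<Psi> x))) (at x)"
      unfolding Kf_def by (rule has_vector_derivative_mult[OF Dder[OF x] e])
    then have "(Kf has_vector_derivative 0) (at x)" by (simp add: algebra_simps)
    then show ?thesis unfolding has_vector_derivative_def by (auto intro: has_derivative_at_withinI)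
  qed
  have Ec: "continuous_on {0..T} (\<lambda>t. E t S S')" for S S'
    unfolding E_def by (intro continuous_intros indefinite_integral_continuous_1 gint)
  have Dc: "continuous_on {0..T} Dt"
    unfolding Dt_def ldet_def by (intro continuous_intros Ec)
  have \<Psi>c: "continuous_on {0..T} \<Psi>"
    unfolding \<Psi>_def by (rule indefinite_integral_continuous_1[OF trint])
  have Kc: "continuous_on {0..T} Kf"
    unfolding Kf_def by (intro continuous_intros Dc \<Psi>c)
  have E0: "E 0 = (\<lambda>S S'. if S = S' then 1 else 0)" by (simp add: E_def fun_eq_iff)
  have K0: "Kf 0 = 1" unfolding Kf_def Dt_def E0 by (simp add: ldet_id[OF finX] \<Psi>_def)
  have KT: "Kf T = 1"
    by (rule has_derivative_zero_unique_strong_interval[OF finK Kc K0 Kder]) (use T0 in auto)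
  have ET: "E T = (\<lambda>S S'. V T $ S $ S')" using EV[of T] T0 by (simp add: fun_eq_iff)
  have "Dt T = Dt T * (exp (\<i> * \<Psi> T) * exp (- \<i> * \<Psi> T))"
    by (simp add: mult_exp_exp)
  also have "\<dots> = exp (- \<i> * \<Psi> T)" using KT unfolding Kf_def by (simp add: mult.assoc[symmetric])
  finally have "Dt T = exp (- \<i> * \<Psi> T)" .
  then show ?thesis unfolding block_det_ldet Dt_def ET \<Psi>_def X_def .
qed




lemma arg_exp:
  fixes r :: real
  shows "\<exists>k::int. Arg (exp (- \<i> * complex_of_real r)) = - r + 2 * pi * of_int k"
proof -
  define z where "z = exp (- \<i> * complex_of_real r)"
  have z0: "z \<noteq> 0" unfolding z_def by simp
  have nz: "norm z = 1" unfolding z_def by (simp add: norm_exp_eq_Re)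
  have "cis (Arg z) = sgn z" by (rule cis_Arg[OF z0])
  also have "sgn z = z" using nz by (simp add: sgn_div_norm)
  finally have "exp (\<i> * complex_of_real (Arg z)) = exp (- \<i> * complex_of_real r)"
    by (simp add: cis_conv_exp z_def)
  then obtain n :: int where n: "\<i> * complex_of_real (Arg z) = - \<i> * complex_of_real r + (of_int (2 * n) * pi) * \<i>"
    unfolding exp_eq by blast
  have "complex_of_real (Arg z) = complex_of_real (- r + 2 * pi * of_int n)"
  proof -
    have "\<i> * complex_of_real (Arg z) = \<i> * complex_of_real (- r + 2 * pi * of_int n)"
      using n by (simp add: algebra_simps)
    then show ?thesis by simp
  qed
  then have "Arg z = - r + 2 * pi * of_int n" using of_real_eq_iff by blast
  then show ?thesis unfolding z_def by blast
qed

lemma herm_trm_real: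
  assumes "hermitian M"
  shows "Im (trm M m) = 0"
proof -
  have "Im (M $ S $ S) = 0" for S
  proof -
    have "M $ S $ S = cnj (M $ S $ S)" using assms unfolding hermitian_def by blast
    then have "Im (M $ S $ S) = Im (cnj (M $ S $ S))" by simp
    then show ?thesis by simp
  qed 
  then show ?thesis unfolding trm_def by (simp add: Im_sum)
qed

theorem mainTheorem8:
  fixes H :: "real \<Rightarrow> complex ^ ('q::finite set) ^ ('q set)"
    and V :: "real \<Rightarrow> complex ^ ('q set) ^ ('q set)"
    and T :: real
  assumes n3: "CARD('q) \<ge> 3"
    and T0: "0 \<le> T"
    and pc: "piecewise_continuous T H"
    and herm: "\<forall>t\<in>{0..T}. hermitian (H t)"
    and u1: "\<forall>t\<in>{0..T}. u1_invariant (H t)"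
    and loc: "\<forall>t\<in>{0..T}. k_local 3 (H t)"
    and V: "time_ordered_exp T H V"
  shows "cong_2pi (body_phase 3 T H)
           (of_nat (2 ^ (CARD('q) - 3)) * complex_of_real (Delta3 (V T)))"
proof -
  define n where "n = CARD('q)"
  define I where "I = (\<lambda>m. integral {0..T} (\<lambda>s. trm (H s) m))"
  have trint: "(\<lambda>s. trm (H s) m) integrable_on {0..T}" for m
    by (rule pc_integrable[OF pc_compose[OF pc cont_trm]])
  have hI: "((\<lambda>s. trm (H s) m) has_integral I m) {0..T}" for m
    unfolding I_def using trint by (rule integrable_integral)
  have Ireal: "I m = complex_of_real (Re (I m))" for m
  proof -
    have "((\<lambda>s. Im (trm (H s) m)) has_integral Im (I m)) {0..T}"
      using has_integral_linear[OF hI bounded_linear_Im] by (simp add: o_def)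
    then have "((\<lambda>s. 0) has_integral Im (I m)) {0..T}"
    proof (rule has_integral_eq[rotated])
      fix x assume "x \<in> {0..T}" then show "Im (trm (H x) m) = 0" using herm herm_trm_real by blast
    qed
    then have "Im (I m) = 0" using has_integral_0 has_integral_unique by blast
    then show ?thesis by (simp add: complex_eq_iff)
  qed
  define r where "r = (\<lambda>m. Re (I m))"
  have th: "\<exists>k::int. theta (V T) m = - r m + 2 * pi * of_int k" for m
  proof -
    have "block_det (V T) m = exp (- \<i> * complex_of_real (r m))"
      using det_formula[OF T0 pc u1 V, of m] Ireal[of m] unfolding I_def r_def by simp
    then show ?thesis unfolding theta_def using arg_exp by simp
  qed
  obtain k0 where k0: "theta (V T) 0 = - r 0 + 2 * pi * of_int k0" using th by blast
  obtain k1 where k1: "theta (V T) 1 = - r 1 + 2 * pi * of_int k1" using th by blast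
  obtain kn where kn: "theta (V T) n = - r n + 2 * pi * of_int kn" using th by blast
  obtain km where km: "theta (V T) (n - 1) = - r (n - 1) + 2 * pi * of_int km" using th by blast
  define c :: complex where "c = of_nat (2 ^ (n - 3))"
  have tr: "trace (H t ** C_op 3) = c * (trm (H t) (n - 1) - trm (H t) 1 - of_nat (n - 2) * (trm (H t) n - trm (H t) 0))"
    if "t \<in> {0..T}" for t
    unfolding c_def n_def by (rule comb_main[OF n3 loc[rule_format, OF that]])
  have "((\<lambda>t. c * (trm (H t) (n - 1) - trm (H t) 1 - of_nat (n - 2) * (trm (H t) n - trm (H t) 0))) has_integral
      c * (I (n - 1) - I 1 - of_nat (n - 2) * (I n - I 0))) {0..T}"
    by (intro has_integral_mult_right has_integral_diff hI)
  then have "((\<lambda>t. trace (H t ** C_op 3)) has_integral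
      c * (I (n - 1) - I 1 - of_nat (n - 2) * (I n - I 0))) {0..T}"
    by (rule has_integral_eq[rotated]) (simp add: tr)
  then have bp: "body_phase 3 T H = - (c * (I (n - 1) - I 1 - of_nat (n - 2) * (I n - I 0)))"
    unfolding body_phase_def by (simp add: integral_unique)
  have n2: "real (n - 2) = real n - 2" using n3 unfolding n_def by (simp add: of_nat_diff)
  define K :: int where "K = - (2 ^ (n - 3)) * (km - k1 - (int n - 2) * (kn - k0))"
  have real_eq: "- (2 ^ (n - 3) * (r (n - 1) - r 1 - (real n - 2) * (r n - r 0)))
      - 2 ^ (n - 3) * (theta (V T) (n - 1) - theta (V T) 1 - (real n - 2) * (theta (V T) n - theta (V T) 0))
      = of_int K * 2 * pi"
    unfolding k0 k1 kn km K_def by (simp add: algebra_simps)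
  have cplx: "body_phase 3 T H = complex_of_real (- (2 ^ (n - 3) * (r (n - 1) - r 1 - (real n - 2) * (r n - r 0))))"
    unfolding bp c_def r_def
    apply (subst (1 2 3 4) Ireal)
    apply (simp add: n2[symmetric])
    done
  have "body_phase 3 T H - of_nat (2 ^ (CARD('q) - 3)) * complex_of_real (Delta3 (V T)) =
      complex_of_real (of_int K * 2 * pi)"
    unfolding cplx Delta3_def n_def[symmetric] real_eq[symmetric] by simp
  then show ?thesis unfolding cong_2pi_def by (intro exI[of _ K]) simp
qed


end
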